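(* Let $r\geq1$ be odd, $m\geq 3$, $n=(r+1)m$, let $u$ be an integer with $\gcd(u,2^m-1)=1$, let $\alpha$ be a primitive element of $\mathbb{F}_{2^{rm}}$, let $0\leq s\leq 2^{rm}-2$, let $\Delta_s=\{\alpha^i\mid s\leq i\leq s+2^{rm-1}-1\}$, and let $f\colon\mathbb{F}_{2^{rm}}\times\mathbb{F}_{2^m}\to\mathbb{F}_2$ be the Boolean function with $\mathrm{supp}(f)=\{(\gamma y^u,y)\mid y\in\mathbb{F}_{2^m}^*,\ \gamma\in\Delta_s\}$. Then $\mathrm{AI}(f)\leq m$. Moreover, if $r=1$ and for every integer $0\le t\le 2^m-2$ the set $$S_t=\{(a,b)\mid 0\le a\le 2^{m}-2,\ 0\le b\le 2^m-1,\ ua+b\equiv t\ (\mathrm{mod}\ 2^m-1),\ \mathrm{wt}_m(a)+\mathrm{wt}_m(b)\le m-1\}$$ satisfies $|S_t|\le 2^{m-1}$, then $\mathrm{AI}(f)=m$ (i.e. $f$ has optimal algebraic immunity).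
   Context: $\mathbb{F}_{2^{rm}}\times\mathbb{F}_{2^m}$ is viewed as an $n$-dimensional $\mathbb{F}_2$-vector space ($\mathbb{F}_{2^m}\subseteq\mathbb{F}_{2^{rm}}$). For an $n$-variable Boolean function $f$, the algebraic immunity is $\mathrm{AI}(f)=\min\{\deg g\mid g\neq 0,\ fg=0\text{ or }(f+1)g=0\}$, where $\deg$ is the algebraic degree; the maximum possible value is $\lceil n/2\rceil$, and $f$ is said to have optimal algebraic immunity if $\mathrm{AI}(f)=\lceil n/2\rceil$. For $0\le i\le 2^k-1$, $\mathrm{wt}_k(i)$ is the number of $1$'s in the binary expansion of $i$ (so $\mathrm{wt}_m(2^m-1)=m$). *)

theory Defs
  imports Main
begin

definition bin_wt :: "nat \<Rightarrow> nat" where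
  "bin_wt i = card {j. bit i j}"

text \<open>The subfield of 2^m elements inside a finite field of characteristic 2.\<close>
definition subfld :: "nat \<Rightarrow> 'a::field set" where
  "subfld m = {y. y ^ (2 ^ m) = y}"

text \<open>Domain F_{2^N} x F_{2^M}, N = r m, M = m.\<close>
definition dom2 :: "nat \<Rightarrow> ('a::field \<times> 'a) set" where
  "dom2 M = UNIV \<times> subfld M"

text \<open>Boolean functions on the domain are predicates g :: 'a \<times> 'a \<Rightarrow> bool
  (values outside dom2 M are irrelevant).\<close>
definition deg_le :: "nat \<Rightarrow> nat \<Rightarrow> ('a::field \<times> 'a \<Rightarrow> bool) \<Rightarrow> nat \<Rightarrow> bool" where
  "deg_le N M g d \<longleftrightarrow>
     (\<exists>c :: nat \<Rightarrow> nat \<Rightarrow> 'a.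
        (\<forall>x y. y \<in> subfld M \<longrightarrow>
           (if g (x, y) then 1 else 0) = (\<Sum>i<2^N. \<Sum>j<2^M. c i j * x ^ i * y ^ j)) \<and>
        (\<forall>i<2^N. \<forall>j<2^M. c i j \<noteq> 0 \<longrightarrow> bin_wt i + bin_wt j \<le> d))"

definition alg_deg :: "nat \<Rightarrow> nat \<Rightarrow> ('a::field \<times> 'a \<Rightarrow> bool) \<Rightarrow> nat" where
  "alg_deg N M g = (LEAST d. deg_le N M g d)"

definition nz_annih :: "nat \<Rightarrow> ('a::field \<times> 'a \<Rightarrow> bool) \<Rightarrow> ('a \<times> 'a \<Rightarrow> bool) \<Rightarrow> bool" where
  "nz_annih M f g \<longleftrightarrow> (\<exists>p\<in>dom2 M. g p) \<and> (\<forall>p\<in>dom2 M. \<not> (f p \<and> g p))"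

definition alg_immunity :: "nat \<Rightarrow> nat \<Rightarrow> ('a::field \<times> 'a \<Rightarrow> bool) \<Rightarrow> nat" where
  "alg_immunity N M f =
     (LEAST d. \<exists>g. (nz_annih M f g \<or> nz_annih M (\<lambda>p. \<not> f p) g) \<and> alg_deg N M g = d)"

definition primitive_elem :: "'a::field \<Rightarrow> bool" where
  "primitive_elem \<alpha> \<longleftrightarrow> (\<forall>x. x \<noteq> 0 \<longrightarrow> (\<exists>i::nat. \<alpha> ^ i = x))"

end

theory Submission
  imports Defs "HOL-Computational_Algebra.Polynomial"
begin

lemma bits_lt: assumes "(n::nat) < 2^m" shows "{j. bit n j} \<subseteq> {..<m}"
proof
  fix j assume "j \<in> {j. bit n j}"
  hence "odd (n div 2^j)" by (simp add: bit_iff_odd)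
  show "j \<in> {..<m}"
  proof (rule ccontr)
    assume "j \<notin> {..<m}"
    hence "2^m \<le> (2::nat)^j" by simp
    hence "n < 2^j" using assms by linarith
    hence "n div 2^j = 0" by simp
    thus False using \<open>odd (n div 2^j)\<close> by simp
  qed
qed

lemma bin_wt_le: "(n::nat) < 2^m \<Longrightarrow> bin_wt n \<le> m"
proof -
  assume "n < 2^m"
  hence "{j. bit n j} \<subseteq> {..<m}" by (rule bits_lt)
  hence "card {j. bit n j} \<le> card {..<m}" by (intro card_mono) auto
  thus ?thesis by (simp add: bin_wt_def)
qed

lemma bin_wt_0: "bin_wt 0 = 0"
  by (simp add: bin_wt_def)

lemma bits_mask: "{j. bit ((2::nat)^m - 1) j} = {..<m}"
proof -
  have "(2::nat)^m - 1 = mask m" by (simp add: mask_eq_exp_minus_1)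
  thus ?thesis by (simp add: bit_mask_iff lessThan_def)
qed

lemma bin_wt_mask: "bin_wt ((2::nat)^m - 1) = m"
  unfolding bin_wt_def bits_mask by simp

lemma bin_wt_lt: assumes "(n::nat) < 2^m - 1" shows "bin_wt n \<le> m - 1"
proof (rule ccontr)
  assume "\<not> bin_wt n \<le> m - 1"
  moreover have "bin_wt n \<le> m" using assms bin_wt_le by simp
  ultimately have "card {j. bit n j} = card {..<m}" unfolding bin_wt_def by simp
  hence eq: "{j. bit n j} = {..<m}" using bits_lt[of n m] assms card_subset_eq[of "{..<m}"] by simp
  have "n = 2^m - 1"
  proof (rule bit_eqI)
    fix k show "bit n k = bit ((2::nat)^m - 1) k" using eq bits_mask[of m] by blast
  qed
  thus False using assms by simp
qed

lemma fermat1: fixes x :: "'a::{field,finite}" assumes "x \<noteq> 0"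
  shows "x ^ (card (UNIV::'a set) - 1) = 1"
proof -
  let ?N = "{y::'a. y \<noteq> 0}"
  have fin: "finite ?N" by simp
  have cN: "card ?N = card (UNIV::'a set) - 1"
  proof -
    have "?N = UNIV - {0}" by auto
    thus ?thesis by (simp add: card_Diff_singleton)
  qed
  have inj: "inj_on (\<lambda>y. x * y) ?N" using assms by (auto simp: inj_on_def)
  have img: "(\<lambda>y. x * y) ` ?N = ?N"
  proof
    show "(\<lambda>y. x * y) ` ?N \<subseteq> ?N" using assms by auto
    show "?N \<subseteq> (\<lambda>y. x * y) ` ?N"
    proof
      fix z assume "z \<in> ?N"
      hence "z = x * (z / x)" "z / x \<in> ?N" using assms by auto
      thus "z \<in> (\<lambda>y. x * y) ` ?N" by blast
    qed
  qed
  have "prod (\<lambda>y. y) ?N = prod (\<lambda>y. x * y) ?N"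
    using prod.reindex[OF inj, of "\<lambda>y. y"] img by simp
  also have "\<dots> = x ^ card ?N * prod (\<lambda>y. y) ?N" by (simp add: prod.distrib)
  finally have "x ^ card ?N * prod (\<lambda>y. y) ?N = 1 * prod (\<lambda>y. y) ?N" by simp
  moreover have "prod (\<lambda>y. y) ?N \<noteq> 0" by simp
  ultimately have "x ^ card ?N = 1" by (metis mult_right_cancel)
  thus ?thesis unfolding cN .
qed

lemma fermat: fixes x :: "'a::{field,finite}" shows "x ^ card (UNIV::'a set) = x"
proof (cases "x = 0")
  case True
  have "0 < card (UNIV::'a set)" by (rule finite_UNIV_card_ge_0) simp
  thus ?thesis using True by (simp add: power_0_left)
next
  case False
  have "0 < card (UNIV::'a set)" by (rule finite_UNIV_card_ge_0) simp
  then obtain k where k: "card (UNIV::'a set) = Suc k" using gr0_implies_Suc by blast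
  have "x ^ k = 1" using fermat1[OF False] k by simp
  thus ?thesis using k by simp
qed


lemma roots_lemma:
  fixes b :: "nat \<Rightarrow> 'a::{field,finite}"
  assumes vanish: "\<forall>y. y \<noteq> 0 \<longrightarrow> (\<Sum>t<card (UNIV::'a set) - 1. b t * y ^ t) = 0"
    and t: "t < card (UNIV::'a set) - 1"
  shows "b t = 0"
proof -
  define Q where "Q = card (UNIV::'a set) - 1"
  define p where "p = (\<Sum>s<Q. monom (b s) s)"
  have pp: "poly p y = (\<Sum>s<Q. b s * y ^ s)" for y
    by (simp add: p_def poly_sum poly_monom)
  have cp: "coeff p n = (if n < Q then b n else 0)" for n
  proof -
    have "coeff p n = (\<Sum>s<Q. if s = n then b s else 0)"
      by (simp add: p_def coeff_sum coeff_monom)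
    also have "\<dots> = (if n < Q then b n else 0)" by (simp add: sum.delta)
    finally show ?thesis .
  qed
  have "p = 0"
  proof (rule ccontr)
    assume "p \<noteq> 0"
    hence c1: "card {x. poly p x = 0} \<le> degree p" by (rule card_poly_roots_bound)
    have "degree p \<le> Q - 1" by (rule degree_le) (auto simp: cp)
    have sub: "{y::'a. y \<noteq> 0} \<subseteq> {x. poly p x = 0}" using vanish pp Q_def by auto
    have cN: "card {y::'a. y \<noteq> 0} = Q"
    proof -
      have "{y::'a. y \<noteq> 0} = UNIV - {0}" by auto
      thus ?thesis by (simp add: card_Diff_singleton Q_def)
    qed
    have "Q \<le> card {x. poly p x = 0}" using card_mono[OF _ sub] cN by simp
    hence "Q \<le> Q - 1" using c1 \<open>degree p \<le> Q - 1\<close> by linarith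
    moreover have "Q \<ge> 1" using t Q_def by simp
    ultimately show False by simp
  qed
  hence "coeff p t = 0" by simp
  thus ?thesis using cp t Q_def by simp
qed

lemma vandermonde_lemma:
  fixes b :: "'b \<Rightarrow> 'a::field" and \<beta> :: "'b \<Rightarrow> 'a"
  assumes fin: "finite I" and inj: "inj_on \<beta> I" and cI: "card I \<le> K"
    and vanish: "\<forall>k<K. (\<Sum>i\<in>I. b i * \<beta> i ^ k) = 0" and i0: "i0 \<in> I"
  shows "b i0 = 0"
proof -
  define P where "P = (\<Prod>i\<in>I - {i0}. [:- \<beta> i, 1:])"
  have dP: "degree P = card (I - {i0})"
    unfolding P_def by (subst degree_prod_sum_eq) auto
  have "card (I - {i0}) = card I - 1" using i0 fin by (simp add: card_Diff_singleton)
  moreover have "card I \<ge> 1" using i0 fin by (metis One_nat_def Suc_leI card_gt_0_iff empty_iff)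
  ultimately have dK: "degree P < K" using dP cI by linarith
  have "(\<Sum>i\<in>I. b i * poly P (\<beta> i)) = (\<Sum>i\<in>I. b i * (\<Sum>k\<le>degree P. coeff P k * \<beta> i ^ k))"
    by (simp add: poly_altdef)
  also have "\<dots> = (\<Sum>k\<le>degree P. coeff P k * (\<Sum>i\<in>I. b i * \<beta> i ^ k))"
    by (simp add: sum_distrib_left sum.swap[of _ I] mult.assoc mult.left_commute)
  also have "\<dots> = 0" using vanish dK by simp
  finally have S: "(\<Sum>i\<in>I. b i * poly P (\<beta> i)) = 0" .
  have z: "poly P (\<beta> i) = 0" if "i \<in> I - {i0}" for i
  proof -
    have "poly P (\<beta> i) = (\<Prod>j\<in>I - {i0}. \<beta> i - \<beta> j)" by (simp add: P_def poly_prod)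
    also have "\<dots> = 0" using that fin by (intro prod_zero) auto
    finally show ?thesis .
  qed
  have "(\<Sum>i\<in>I. b i * poly P (\<beta> i)) = b i0 * poly P (\<beta> i0) + (\<Sum>i\<in>I - {i0}. b i * poly P (\<beta> i))"
    using fin i0 by (simp add: sum.remove)
  also have "(\<Sum>i\<in>I - {i0}. b i * poly P (\<beta> i)) = 0" using z by simp
  finally have "b i0 * poly P (\<beta> i0) = 0" using S by simp
  moreover have "poly P (\<beta> i0) \<noteq> 0"
  proof -
    have "poly P (\<beta> i0) = (\<Prod>j\<in>I - {i0}. \<beta> i0 - \<beta> j)" by (simp add: P_def poly_prod)
    also have "\<dots> \<noteq> 0"
    proof -
      have "\<beta> i0 - \<beta> j \<noteq> 0" if "j \<in> I - {i0}" for j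
        using that inj i0 by (auto simp: inj_on_def)
      thus ?thesis using fin by simp
    qed
    finally show ?thesis .
  qed
  ultimately show ?thesis by simp
qed

definition ee :: "int \<Rightarrow> nat \<Rightarrow> nat \<Rightarrow> nat \<Rightarrow> nat" where
  "ee u Q i j = nat ((u * int i + int j) mod int Q)"

definition aa :: "(nat \<Rightarrow> nat \<Rightarrow> 'a::field) \<Rightarrow> int \<Rightarrow> nat \<Rightarrow> nat \<Rightarrow> nat \<Rightarrow> nat \<Rightarrow> 'a" where
  "aa c u Q q t i = (\<Sum>j\<in>{j. j < q \<and> ee u Q i j = t}. c i j)"

definition GG :: "(nat \<Rightarrow> nat \<Rightarrow> 'a::field) \<Rightarrow> nat \<Rightarrow> 'a \<Rightarrow> 'a \<Rightarrow> 'a" where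
  "GG c q x y = (\<Sum>i<q. \<Sum>j<q. c i j * x ^ i * y ^ j)"

lemma powi_mod:
  fixes y :: "'a::field"
  assumes "y \<noteq> 0" "y ^ Q = 1" "Q > 0"
  shows "y powi z = y ^ nat (z mod int Q)"
proof -
  have z: "z = int Q * (z div int Q) + z mod int Q" by simp
  have "y powi z = y powi (int Q * (z div int Q)) * y powi (z mod int Q)"
    by (subst z, rule power_int_add) (simp add: assms)
  also have "y powi (int Q * (z div int Q)) = 1"
    by (simp add: power_int_mult power_int_of_nat assms)
  also have "y powi (z mod int Q) = y powi int (nat (z mod int Q))"
  proof -
    have w: "int (nat (z mod int Q)) = z mod int Q" using assms(3) by simp
    show ?thesis by (simp only: w)
  qed
  also have "\<dots> = y ^ nat (z mod int Q)" by (rule power_int_of_nat)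
  finally show ?thesis by simp
qed

lemma term_eq:
  fixes y :: "'a::field"
  assumes "y \<noteq> 0" "y ^ Q = 1" "Q > 0"
  shows "(\<gamma> * y powi u) ^ i * y ^ j = \<gamma> ^ i * y ^ ee u Q i j"
proof -
  have "(\<gamma> * y powi u) ^ i * y ^ j = \<gamma> ^ i * (y powi (u * int i) * y powi int j)"
    by (simp add: power_mult_distrib power_int_power' power_int_of_nat)
  also have "y powi (u * int i) * y powi int j = y powi (u * int i + int j)"
    by (rule power_int_add[symmetric]) (simp add: assms)
  also have "\<dots> = y ^ ee u Q i j" unfolding ee_def by (rule powi_mod[OF assms])
  finally show ?thesis .
qed

lemma stepA_eq:
  fixes y :: "'a::field"
  assumes "y \<noteq> 0" "y ^ Q = 1" "Q > 0"
  shows "GG c q (\<gamma> * y powi u) y = (\<Sum>t<Q. (\<Sum>i<q. aa c u Q q t i * \<gamma> ^ i) * y ^ t)"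
proof -
  have ee_lt: "ee u Q i j < Q" for i j
    using assms(3) unfolding ee_def by (simp add: nat_less_iff)
  have "GG c q (\<gamma> * y powi u) y = (\<Sum>i<q. \<Sum>j<q. c i j * \<gamma> ^ i * y ^ ee u Q i j)"
    unfolding GG_def using term_eq[OF assms] by (simp add: mult.assoc)
  also have "\<dots> = (\<Sum>i<q. \<Sum>t<Q. \<Sum>j\<in>{j. j < q \<and> ee u Q i j = t}. c i j * \<gamma> ^ i * y ^ ee u Q i j)"
  proof (rule sum.cong[OF refl])
    fix i
    have "(\<Sum>t<Q. sum (\<lambda>j. c i j * \<gamma> ^ i * y ^ ee u Q i j) {j \<in> {..<q}. ee u Q i j = t})
        = (\<Sum>j<q. c i j * \<gamma> ^ i * y ^ ee u Q i j)"
      by (rule sum.group) (auto simp: ee_lt)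
    moreover have "{j \<in> {..<q}. ee u Q i j = t} = {j. j < q \<and> ee u Q i j = t}" for t by auto
    ultimately show "(\<Sum>j<q. c i j * \<gamma> ^ i * y ^ ee u Q i j) =
       (\<Sum>t<Q. \<Sum>j\<in>{j. j < q \<and> ee u Q i j = t}. c i j * \<gamma> ^ i * y ^ ee u Q i j)" by simp
  qed
  also have "\<dots> = (\<Sum>i<q. \<Sum>t<Q. aa c u Q q t i * \<gamma> ^ i * y ^ t)"
    unfolding aa_def by (intro sum.cong refl) (simp add: sum_distrib_right)
  also have "\<dots> = (\<Sum>t<Q. (\<Sum>i<q. aa c u Q q t i * \<gamma> ^ i) * y ^ t)"
    by (subst sum.swap) (simp add: sum_distrib_right)
  finally show ?thesis .
qed

lemma stepA:
  fixes \<gamma> :: "'a::{field,finite}"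
  assumes "\<forall>y. y \<noteq> 0 \<longrightarrow> GG c q (\<gamma> * y powi u) y = 0"
    and "t < card (UNIV::'a set) - 1"
  shows "(\<Sum>i<q. aa c u (card (UNIV::'a set) - 1) q t i * \<gamma> ^ i) = 0"
proof -
  let ?Q = "card (UNIV::'a set) - 1"
  have Q0: "?Q > 0" using assms(2) by simp
  show ?thesis
  proof (rule roots_lemma[where b = "\<lambda>t. (\<Sum>i<q. aa c u ?Q q t i * \<gamma> ^ i)", OF _ assms(2)], intro allI impI)
    fix y :: 'a assume "y \<noteq> 0"
    hence "GG c q (\<gamma> * y powi u) y = (\<Sum>t<?Q. (\<Sum>i<q. aa c u ?Q q t i * \<gamma> ^ i) * y ^ t)"
      using stepA_eq[OF _ fermat1 Q0] by blast
    thus "(\<Sum>t<?Q. (\<Sum>i<q. aa c u ?Q q t i * \<gamma> ^ i) * y ^ t) = 0" using assms(1) \<open>y \<noteq> 0\<close> by simp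
  qed
qed

lemma stepB:
  fixes \<alpha> :: "'a::field"
  assumes "\<alpha> \<noteq> 0" "finite I" "inj_on (\<lambda>i. \<alpha> ^ i) I" "card I \<le> L"
    and "\<forall>k<L. (\<Sum>i\<in>I. a i * (\<alpha> ^ (s' + k)) ^ i) = 0" "i0 \<in> I"
  shows "a i0 = 0"
proof -
  have "(\<lambda>i. a i * \<alpha> ^ (s' * i)) i0 = 0"
  proof (rule vandermonde_lemma[OF assms(2,3,4) _ assms(6)], intro allI impI)
    fix k assume "k < L"
    have "(\<Sum>i\<in>I. a i * \<alpha> ^ (s' * i) * (\<alpha> ^ i) ^ k) = (\<Sum>i\<in>I. a i * (\<alpha> ^ (s' + k)) ^ i)"
    proof (intro sum.cong refl)
      fix i
      have "\<alpha> ^ (s' * i) * (\<alpha> ^ i) ^ k = (\<alpha> ^ (s' + k)) ^ i"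
        by (simp add: power_mult[symmetric] power_add[symmetric] algebra_simps)
      thus "a i * \<alpha> ^ (s' * i) * (\<alpha> ^ i) ^ k = a i * (\<alpha> ^ (s' + k)) ^ i"
        by (simp add: mult.assoc)
    qed
    thus "(\<Sum>i\<in>I. a i * \<alpha> ^ (s' * i) * (\<alpha> ^ i) ^ k) = 0" using assms(5) \<open>k < L\<close> by simp
  qed
  thus ?thesis using assms(1) by simp
qed

lemma pow_mod_Q:
  fixes \<alpha> :: "'a::field"
  assumes "\<alpha> ^ Q = 1"
  shows "\<alpha> ^ i = \<alpha> ^ (i mod Q)"
proof -
  have "\<alpha> ^ i = \<alpha> ^ (Q * (i div Q) + i mod Q)" by simp
  also have "\<dots> = (\<alpha> ^ Q) ^ (i div Q) * \<alpha> ^ (i mod Q)" by (simp only: power_add power_mult)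
  finally show ?thesis using assms by simp
qed

lemma prim_nonzero:
  fixes \<alpha> :: "'a::{field,finite}"
  assumes prim: "primitive_elem \<alpha>" and c3: "card (UNIV::'a set) \<ge> 3"
  shows "\<alpha> \<noteq> 0"
proof
  assume a0: "\<alpha> = 0"
  have "card {0::'a, 1} \<le> 2" by (simp add: card_insert_le_m1)
  have "{0::'a,1} \<noteq> UNIV"
  proof
    assume "{0::'a,1} = UNIV"
    hence "card (UNIV::'a set) \<le> 2" using \<open>card {0::'a, 1} \<le> 2\<close> by simp
    thus False using c3 by simp
  qed
  then obtain x :: 'a where x: "x \<noteq> 0" "x \<noteq> 1" by auto
  then obtain i where "\<alpha> ^ i = x" using prim unfolding primitive_elem_def by blast
  thus False using a0 x by (cases i) auto
qed

lemma prim_inj: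
  fixes \<alpha> :: "'a::{field,finite}"
  assumes prim: "primitive_elem \<alpha>" and c3: "card (UNIV::'a set) \<ge> 3"
  shows "inj_on (\<lambda>i. \<alpha> ^ i) {..< card (UNIV::'a set) - 1}"
proof -
  let ?Q = "card (UNIV::'a set) - 1"
  have a0: "\<alpha> \<noteq> 0" by (rule prim_nonzero[OF assms])
  have aQ: "\<alpha> ^ ?Q = 1" by (rule fermat1[OF a0])
  have Q0: "?Q > 0" using c3 by simp
  have img: "(\<lambda>i. \<alpha> ^ i) ` {..<?Q} = {x. x \<noteq> 0}"
  proof
    show "(\<lambda>i. \<alpha> ^ i) ` {..<?Q} \<subseteq> {x. x \<noteq> 0}" using a0 by auto
    show "{x. x \<noteq> 0} \<subseteq> (\<lambda>i. \<alpha> ^ i) ` {..<?Q}"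
    proof
      fix x :: 'a assume "x \<in> {x. x \<noteq> 0}"
      then obtain i where "\<alpha> ^ i = x" using prim unfolding primitive_elem_def by auto
      hence "x = \<alpha> ^ (i mod ?Q)" using pow_mod_Q[OF aQ] by simp
      moreover have "i mod ?Q \<in> {..<?Q}" using Q0 by simp
      ultimately show "x \<in> (\<lambda>i. \<alpha> ^ i) ` {..<?Q}" by blast
    qed
  qed
  have cN: "card {y::'a. y \<noteq> 0} = ?Q"
  proof -
    have "{y::'a. y \<noteq> 0} = UNIV - {0}" by auto
    thus ?thesis by (simp add: card_Diff_singleton)
  qed
  show ?thesis
  proof (rule eq_card_imp_inj_on)
    show "finite {..<?Q}" by simp
    show "card ((\<lambda>i. \<alpha> ^ i) ` {..<?Q}) = card {..<?Q}" unfolding img cN by simp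
  qed
qed

lemma pow_eq_mod:
  fixes \<alpha> :: "'a::{field,finite}"
  assumes prim: "primitive_elem \<alpha>" and c3: "card (UNIV::'a set) \<ge> 3"
    and eq: "\<alpha> ^ a = \<alpha> ^ b"
  shows "a mod (card (UNIV::'a set) - 1) = b mod (card (UNIV::'a set) - 1)"
proof -
  let ?Q = "card (UNIV::'a set) - 1"
  have aQ: "\<alpha> ^ ?Q = 1" by (rule fermat1[OF prim_nonzero[OF assms(1,2)]])
  have Q0: "?Q > 0" using c3 by simp
  have "\<alpha> ^ (a mod ?Q) = \<alpha> ^ (b mod ?Q)" using eq pow_mod_Q[OF aQ] by metis
  thus ?thesis using inj_onD[OF prim_inj[OF assms(1,2)]] Q0 by simp
qed

lemma ee_int: "Q > 0 \<Longrightarrow> int (ee u Q i j) = (u * int i + int j) mod int Q"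
  by (simp add: ee_def)

lemma core:
  fixes c :: "nat \<Rightarrow> nat \<Rightarrow> 'a::{field,finite}" and \<alpha> :: 'a and u :: int
  assumes card: "card (UNIV::'a set) = 2 ^ m" and m: "m \<ge> 2"
    and prim: "primitive_elem \<alpha>"
    and hS: "\<forall>t::nat. t \<le> 2 ^ m - 2 \<longrightarrow>
              card {(a, b). a \<le> 2 ^ m - 2 \<and> b \<le> 2 ^ m - 1 \<and>
                     (u * int a + int b) mod (2 ^ m - 1) = int t mod (2 ^ m - 1) \<and>
                     bin_wt a + bin_wt b \<le> m - 1} \<le> 2 ^ (m - 1)"
    and wt: "\<forall>i<2^m. \<forall>j<2^m. c i j \<noteq> 0 \<longrightarrow> bin_wt i + bin_wt j \<le> m - 1"
    and V: "(\<forall>y. y \<noteq> 0 \<longrightarrow> (\<forall>k<2^(m-1). GG c (2^m) (\<alpha> ^ (s + k) * y powi u) y = 0))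
          \<or> (\<forall>y. y \<noteq> 0 \<longrightarrow> GG c (2^m) (0 * y powi u) y = 0 \<and>
               (\<forall>k<2^(m-1) - 1. GG c (2^m) (\<alpha> ^ (s + 2^(m-1) + k) * y powi u) y = 0))"
  shows "\<forall>i<2^m. \<forall>j<2^m. c i j = 0"
proof -
  define q :: nat where "q = 2 ^ m"
  define Q :: nat where "Q = card (UNIV::'a set) - 1"
  define K :: nat where "K = 2 ^ (m - 1)"
  have QQ: "Q = 2 ^ m - 1" using card Q_def by simp
  have "(2::nat)^2 \<le> 2^m" using m by (intro power_increasing) simp_all
  hence q4: "q \<ge> 4" unfolding q_def by simp
  hence qQ: "q = Q + 1" using QQ q_def by simp
  have KK: "2 * K = q" unfolding K_def q_def using m by (cases m) auto
  have c3: "card (UNIV::'a set) \<ge> 3" using card q4 q_def by simp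
  have a0: "\<alpha> \<noteq> 0" by (rule prim_nonzero[OF prim c3])
  have injQ: "inj_on (\<lambda>i. \<alpha> ^ i) {..<Q}" unfolding Q_def by (rule prim_inj[OF prim c3])
  have iQ: "int Q = 2 ^ m - 1" using QQ q4 q_def by (simp add: of_nat_diff)
  define S where "S t = {(a, b). a \<le> 2 ^ m - 2 \<and> b \<le> 2 ^ m - 1 \<and>
                     (u * int a + int b) mod (2 ^ m - 1) = int t mod (2 ^ m - 1) \<and>
                     bin_wt a + bin_wt b \<le> m - 1}" for t :: nat
  have finS: "finite (S t)" for t
  proof -
    have "S t \<subseteq> {..2^m-2} \<times> {..2^m-1}" unfolding S_def by auto
    thus ?thesis by (rule finite_subset) simp
  qed
  have cS: "card (S t) \<le> K" if "t < Q" for t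
  proof -
    have "t \<le> 2^m - 2" using that QQ by simp
    from hS[rule_format, OF this] show ?thesis unfolding S_def K_def .
  qed
  have wtq: "bin_wt (q - 1) = m" unfolding q_def by (rule bin_wt_mask)
  have memS: "(i, j) \<in> S t" if "i < q" "j < q" "c i j \<noteq> 0" "ee u Q i j = t" "t < Q" for i j t
  proof -
    have w: "bin_wt i + bin_wt j \<le> m - 1" using wt that q_def by auto
    have "i \<noteq> q - 1" using w wtq m by auto
    hence i: "i \<le> 2^m - 2" using that(1) q_def by simp
    have j: "j \<le> 2^m - 1" using that(2) q_def by simp
    have e: "(u * int i + int j) mod int Q = int t"
      using that(4) ee_int[of Q u i j] q4 qQ by simp
    have tt: "int t mod int Q = int t" using that(5) by simp
    show ?thesis unfolding S_def using i j w e tt iQ by simp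
  qed
  have mem0: "(0, t) \<in> S t" if "t < Q" for t
  proof -
    have "bin_wt t \<le> m - 1" using that QQ by (intro bin_wt_lt) simp
    thus ?thesis unfolding S_def using that QQ by (simp add: bin_wt_0)
  qed
  define I where "I t = {i. i < q \<and> aa c u Q q t i \<noteq> 0}" for t
  have I_sub: "I t \<subseteq> fst ` S t" if "t < Q" for t
  proof
    fix i assume "i \<in> I t"
    hence i: "i < q" "aa c u Q q t i \<noteq> 0" unfolding I_def by auto
    then obtain j where j: "j \<in> {j. j < q \<and> ee u Q i j = t}" "c i j \<noteq> 0"
      unfolding aa_def using sum.not_neutral_contains_not_neutral by blast
    have "(i, j) \<in> S t" by (rule memS) (use i j that in auto)
    thus "i \<in> fst ` S t" by force
  qed
  have I_Q: "I t \<subseteq> {..<Q}" if tQ: "t < Q" for t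
  proof
    fix i assume "i \<in> I t"
    then obtain x where "x \<in> S t" "i = fst x" using I_sub[OF tQ] by auto
    hence "i \<le> 2^m - 2" unfolding S_def by auto
    thus "i \<in> {..<Q}" using QQ q4 q_def by simp
  qed
  have finI: "finite (I t)" for t unfolding I_def by simp
  have sumI: "(\<Sum>i<q. aa c u Q q t i * \<gamma> ^ i) = (\<Sum>i\<in>I t. aa c u Q q t i * \<gamma> ^ i)" for t \<gamma>
    by (rule sum.mono_neutral_right) (auto simp: I_def)
  have vanish_aa: "\<forall>i<q. aa c u Q q t i = 0" if "t < Q" for t
  proof -
    have "I t = {}"
    proof (cases "\<forall>y. y \<noteq> 0 \<longrightarrow> (\<forall>k<2^(m-1). GG c (2^m) (\<alpha> ^ (s + k) * y powi u) y = 0)")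
      case True
      have v: "\<forall>k<K. (\<Sum>i\<in>I t. aa c u Q q t i * (\<alpha> ^ (s + k)) ^ i) = 0"
      proof (intro allI impI)
        fix k assume "k < K"
        have "(\<Sum>i<q. aa c u Q q t i * (\<alpha> ^ (s + k)) ^ i) = 0"
          unfolding Q_def
          by (rule stepA) (use True \<open>k < K\<close> that in \<open>auto simp: K_def q_def Q_def\<close>)
        thus "(\<Sum>i\<in>I t. aa c u Q q t i * (\<alpha> ^ (s + k)) ^ i) = 0" using sumI by simp
      qed
      have "card (I t) \<le> card (fst ` S t)" using I_sub[OF that] finS by (intro card_mono) auto
      also have "\<dots> \<le> card (S t)" using finS by (rule card_image_le)
      finally have "card (I t) \<le> K" using cS[OF that] by simp
      hence "\<forall>i\<in>I t. aa c u Q q t i = 0"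
        using stepB[OF a0 finI inj_on_subset[OF injQ I_Q[OF that]] _ v] by blast
      thus ?thesis unfolding I_def by auto
    next
      case False
      hence V2: "\<forall>y. y \<noteq> 0 \<longrightarrow> GG c (2^m) (0 * y powi u) y = 0 \<and>
               (\<forall>k<2^(m-1) - 1. GG c (2^m) (\<alpha> ^ (s + 2^(m-1) + k) * y powi u) y = 0)"
        using V by blast
      have "(\<Sum>i<q. aa c u Q q t i * 0 ^ i) = 0"
        unfolding Q_def
        by (rule stepA) (use V2 that in \<open>auto simp: q_def Q_def\<close>)
      moreover have "(\<Sum>i<q. aa c u Q q t i * 0 ^ i) = aa c u Q q t 0"
      proof -
        have "(\<Sum>i<q. aa c u Q q t i * 0 ^ i) = (\<Sum>i<q. if i = 0 then aa c u Q q t i else 0)"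
          by (intro sum.cong refl) simp
        also have "\<dots> = aa c u Q q t 0" using q4 by (simp add: sum.delta)
        finally show ?thesis .
      qed
      ultimately have z0: "0 \<notin> I t" unfolding I_def by simp
      have v: "\<forall>k<K - 1. (\<Sum>i\<in>I t. aa c u Q q t i * (\<alpha> ^ (s + K + k)) ^ i) = 0"
      proof (intro allI impI)
        fix k assume "k < K - 1"
        have "(\<Sum>i<q. aa c u Q q t i * (\<alpha> ^ (s + K + k)) ^ i) = 0"
          unfolding Q_def
          by (rule stepA) (use V2 \<open>k < K - 1\<close> that in \<open>auto simp: K_def q_def Q_def\<close>)
        thus "(\<Sum>i\<in>I t. aa c u Q q t i * (\<alpha> ^ (s + K + k)) ^ i) = 0" using sumI by simp
      qed
      have "I t \<subseteq> fst ` S t - {0}" using I_sub[OF that] z0 by auto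
      hence "card (I t) \<le> card (fst ` S t - {0})" using finS by (intro card_mono) auto
      also have "\<dots> = card (fst ` S t) - 1"
      proof -
        have "0 \<in> fst ` S t" using mem0[OF that] by force
        thus ?thesis using finS by (simp add: card_Diff_singleton)
      qed
      also have "\<dots> \<le> card (S t) - 1" using finS card_image_le by (metis diff_le_mono)
      finally have "card (I t) \<le> K - 1" using cS[OF that] by simp
      hence "\<forall>i\<in>I t. aa c u Q q t i = 0"
        using stepB[OF a0 finI inj_on_subset[OF injQ I_Q[OF that]] _ v] by blast
      thus ?thesis unfolding I_def by auto
    qed
    thus ?thesis unfolding I_def by auto
  qed
  show ?thesis
  proof (intro allI impI, rule ccontr)
    fix i j assume ij: "i < 2^m" "j < 2^m" "c i j \<noteq> 0"
    define t where "t = ee u Q i j"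
    have tQ: "t < Q" unfolding t_def ee_def using q4 qQ by (simp add: nat_less_iff)
    have w: "bin_wt i + bin_wt j \<le> m - 1" using wt ij by auto
    have jq: "j < Q" using w wtq m ij q_def qQ by (cases "j = q - 1") auto
    have "aa c u Q q t i = (\<Sum>j'\<in>{j'. j' < q \<and> ee u Q i j' = t}. if j' = j then c i j' else 0)"
      unfolding aa_def
    proof (intro sum.cong refl)
      fix j' assume j': "j' \<in> {j'. j' < q \<and> ee u Q i j' = t}"
      show "c i j' = (if j' = j then c i j' else 0)"
      proof (cases "j' = j")
        case False
        show ?thesis
        proof (rule ccontr)
          assume "c i j' \<noteq> (if j' = j then c i j' else 0)"
          hence cne: "c i j' \<noteq> 0" using False by simp
          hence "bin_wt i + bin_wt j' \<le> m - 1" using wt ij j' q_def by auto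
          hence j'Q: "j' < Q" using wtq m j' qQ by (cases "j' = q - 1") auto
          have "(u * int i + int j') mod int Q = (u * int i + int j) mod int Q"
            using j' t_def ee_int[of Q u i j] ee_int[of Q u i j'] q4 qQ by simp
          hence "((- (u * int i)) + (u * int i + int j')) mod int Q = ((- (u * int i)) + (u * int i + int j)) mod int Q"
            by (rule mod_add_cong[OF refl])
          hence "int j' mod int Q = int j mod int Q" by simp
          hence "int j' = int j" using j'Q jq by simp
          thus False using False by simp
        qed
      qed simp
    qed
    also have "\<dots> = c i j" using ij q_def t_def by (simp add: sum.delta)
    finally have "aa c u Q q t i = c i j" .
    moreover have "aa c u Q q t i = 0" using vanish_aa[OF tQ] ij q_def by simp
    ultimately show False using ij by simp
  qed
qed



lemma delta_poly:
  fixes a :: "'a::{field,finite}"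
  shows "\<exists>d. \<forall>x. (if x = a then 1 else 0) = (\<Sum>i<card (UNIV::'a set). d i * x ^ i)"
proof -
  let ?n = "card (UNIV::'a set)"
  define p where "p = 1 - [:-a, 1:] ^ (?n - 1)"
  have n2: "?n \<ge> 2"
  proof -
    have "card {0::'a, 1} = 2" by simp
    moreover have "card {0::'a, 1} \<le> ?n" by (rule card_mono) simp_all
    ultimately show ?thesis by simp
  qed
  have dp: "degree p < ?n"
  proof -
    have "degree p \<le> max (degree (1::'a poly)) (degree ([:-a, 1:] ^ (?n - 1)))"
      unfolding p_def by (rule degree_diff_le_max)
    also have "degree ([:-a, 1:] ^ (?n - 1)) \<le> degree [:-a, 1:] * (?n - 1)" by (rule degree_power_le)
    finally show ?thesis using n2 by simp
  qed
  have "(if x = a then 1 else 0) = (\<Sum>i<?n. coeff p i * x ^ i)" for x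
  proof -
    have "poly p x = (\<Sum>i\<le>degree p. coeff p i * x ^ i)" by (rule poly_altdef)
    also have "\<dots> = (\<Sum>i<?n. coeff p i * x ^ i)"
      by (rule sum.mono_neutral_left) (use dp in \<open>auto simp: coeff_eq_0\<close>)
    finally have e: "poly p x = (\<Sum>i<?n. coeff p i * x ^ i)" .
    have "poly p x = 1 - (x - a) ^ (?n - 1)" by (simp add: p_def)
    also have "\<dots> = (if x = a then 1 else 0)"
      using fermat1[of "x - a"] n2 by auto
    finally show ?thesis using e by simp
  qed
  thus ?thesis by blast
qed


lemma swap4:
  "(\<Sum>a\<in>A. \<Sum>b\<in>B. \<Sum>i\<in>I. \<Sum>j\<in>J. f a b i j) = (\<Sum>i\<in>I. \<Sum>j\<in>J. \<Sum>a\<in>A. \<Sum>b\<in>B. f a b i j)"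
proof -
  have "(\<Sum>a\<in>A. \<Sum>b\<in>B. \<Sum>i\<in>I. \<Sum>j\<in>J. f a b i j) = (\<Sum>a\<in>A. \<Sum>i\<in>I. \<Sum>b\<in>B. \<Sum>j\<in>J. f a b i j)"
    by (rule sum.cong[OF refl], rule sum.swap)
  also have "\<dots> = (\<Sum>i\<in>I. \<Sum>a\<in>A. \<Sum>b\<in>B. \<Sum>j\<in>J. f a b i j)" by (rule sum.swap)
  also have "\<dots> = (\<Sum>i\<in>I. \<Sum>a\<in>A. \<Sum>j\<in>J. \<Sum>b\<in>B. f a b i j)"
    by (rule sum.cong[OF refl], rule sum.cong[OF refl], rule sum.swap)
  also have "\<dots> = (\<Sum>i\<in>I. \<Sum>j\<in>J. \<Sum>a\<in>A. \<Sum>b\<in>B. f a b i j)"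
    by (rule sum.cong[OF refl], rule sum.swap)
  finally show ?thesis .
qed

lemma interp:
  fixes F :: "'a::{field,finite} \<Rightarrow> 'a \<Rightarrow> 'a"
  shows "\<exists>c. \<forall>x y. F x y = (\<Sum>i<card (UNIV::'a set). \<Sum>j<card (UNIV::'a set). c i j * x ^ i * y ^ j)"
proof -
  let ?n = "card (UNIV::'a set)"
  have "\<forall>a::'a. \<exists>d. \<forall>x. (if x = a then 1 else 0) = (\<Sum>i<?n. d i * x ^ i)"
    by (intro allI delta_poly)
  hence "\<exists>D. \<forall>a::'a. \<forall>x. (if x = a then 1 else 0) = (\<Sum>i<?n. D a i * x ^ i)" by (rule choice)
  then obtain D where D0: "\<forall>a::'a. \<forall>x. (if x = a then 1 else 0) = (\<Sum>i<?n. D a i * x ^ i)" by blast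
  have D: "(if x = a then 1 else 0) = (\<Sum>i<?n. D a i * x ^ i)" for a x :: 'a using D0 by blast
  define c where "c i j = (\<Sum>a\<in>UNIV. \<Sum>b\<in>UNIV. F a b * D a i * D b j)" for i j
  have "F x y = (\<Sum>i<?n. \<Sum>j<?n. c i j * x ^ i * y ^ j)" for x y
  proof -
    have e1: "F a b * (if x = a then 1 else 0) * (if y = b then 1 else 0) = (if b = y then (if a = x then F a b else 0) else 0)" for a b
      by simp
    have e2: "(\<Sum>b\<in>UNIV. F a b * (if x = a then 1 else 0) * (if y = b then 1 else 0)) = (if a = x then F a y else 0)" for a
      unfolding e1 by (simp add: sum.delta')
    have "(\<Sum>a\<in>UNIV. \<Sum>b\<in>UNIV. F a b * (if x = a then 1 else 0) * (if y = b then 1 else 0)) = F x y"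
      unfolding e2 by (simp add: sum.delta')
    hence 1: "F x y = (\<Sum>a\<in>UNIV. \<Sum>b\<in>UNIV. F a b * (if x = a then 1 else 0) * (if y = b then 1 else 0))" by simp
    have 2: "F a b * (if x = a then 1 else 0) * (if y = b then 1 else 0)
        = (\<Sum>i<?n. \<Sum>j<?n. F a b * D a i * D b j * x ^ i * y ^ j)" for a b
    proof -
      have "F a b * (if x = a then 1 else 0) * (if y = b then 1 else 0)
          = F a b * ((\<Sum>i<?n. D a i * x ^ i) * (\<Sum>j<?n. D b j * y ^ j))" by (simp add: D[symmetric])
      also have "\<dots> = F a b * (\<Sum>i<?n. \<Sum>j<?n. (D a i * x ^ i) * (D b j * y ^ j))"
        by (simp only: sum_product)
      also have "\<dots> = (\<Sum>i<?n. \<Sum>j<?n. F a b * ((D a i * x ^ i) * (D b j * y ^ j)))"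
        by (simp only: sum_distrib_left)
      also have "\<dots> = (\<Sum>i<?n. \<Sum>j<?n. F a b * D a i * D b j * x ^ i * y ^ j)"
        by (rule sum.cong[OF refl], rule sum.cong[OF refl]) (simp only: mult_ac)
      finally show ?thesis .
    qed
    have "F x y = (\<Sum>a\<in>UNIV. \<Sum>b\<in>UNIV. \<Sum>i<?n. \<Sum>j<?n. F a b * D a i * D b j * x ^ i * y ^ j)"
      by (subst 1, rule sum.cong[OF refl], rule sum.cong[OF refl], rule 2)
    also have "\<dots> = (\<Sum>i<?n. \<Sum>j<?n. \<Sum>a\<in>UNIV. \<Sum>b\<in>UNIV. F a b * D a i * D b j * x ^ i * y ^ j)"
      by (rule swap4)
    also have "\<dots> = (\<Sum>i<?n. \<Sum>j<?n. c i j * x ^ i * y ^ j)"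
      unfolding c_def by (rule sum.cong[OF refl], rule sum.cong[OF refl]) (simp only: sum_distrib_right)
    finally show ?thesis .
  qed
  thus ?thesis by blast
qed


theorem theorem2:
  fixes r m :: nat and u :: int and \<alpha> :: "'a::{field,finite}" and s :: nat
    and f :: "'a \<times> 'a \<Rightarrow> bool"
  assumes "odd r" and "r \<ge> 1" and "m \<ge> 3"
    and "card (UNIV :: 'a set) = 2 ^ (r * m)"
    and "gcd u (2 ^ m - 1) = 1"
    and "primitive_elem \<alpha>"
    and "s \<le> 2 ^ (r * m) - 2"
    and "f = (\<lambda>p. p \<in> {(\<gamma> * y powi u, y) | \<gamma> y.
                 y \<in> subfld m \<and> y \<noteq> 0 \<and>
                 \<gamma> \<in> {\<alpha> ^ i | i. s \<le> i \<and> i \<le> s + 2 ^ (r * m - 1) - 1}})"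
  shows "alg_immunity (r * m) m f \<le> m \<and>
         ((r = 1 \<and>
           (\<forall>t::nat. t \<le> 2 ^ m - 2 \<longrightarrow>
              card {(a, b). a \<le> 2 ^ m - 2 \<and> b \<le> 2 ^ m - 1 \<and>
                     (u * int a + int b) mod (2 ^ m - 1) = int t mod (2 ^ m - 1) \<and>
                     bin_wt a + bin_wt b \<le> m - 1} \<le> 2 ^ (m - 1)))
          \<longrightarrow> alg_immunity (r * m) m f = m)"
proof -
  have m3: "m \<ge> 3" by fact
  have "(2::nat)^1 < 2^m" using m3 by (intro power_strict_increasing) auto
  hence m1: "Suc 0 < (2::nat)^m" by simp
  have fdef: "f p \<longleftrightarrow> (\<exists>\<gamma> y i. p = (\<gamma> * y powi u, y) \<and> y \<in> subfld m \<and> y \<noteq> 0 \<and>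
                 \<gamma> = \<alpha> ^ i \<and> s \<le> i \<and> i \<le> s + 2 ^ (r * m - 1) - 1)" for p
    using assms(8) by auto
  define g0 where "g0 = (\<lambda>p::'a \<times> 'a. snd p = 0)"
  have sub0: "(0::'a) \<in> subfld m" unfolding subfld_def by simp
  have ann0: "nz_annih m f g0"
    unfolding nz_annih_def
  proof
    show "\<exists>p\<in>dom2 m. g0 p" using sub0 unfolding dom2_def g0_def by auto
    show "\<forall>p\<in>dom2 m. \<not> (f p \<and> g0 p)" unfolding g0_def using fdef by auto
  qed
  define c :: "nat \<Rightarrow> nat \<Rightarrow> 'a" where
      "c i j = (if i = 0 then (if j = 0 then 1 else 0) - (if j = 2^m - 1 then 1 else 0) else 0)" for i j
  have deg0: "deg_le (r * m) m g0 m"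
    unfolding deg_le_def
  proof (rule exI[of _ c], intro conjI allI impI)
    fix x y :: 'a assume y: "y \<in> subfld m"
    have "(\<Sum>i<2^(r*m). \<Sum>j<2^m. c i j * x ^ i * y ^ j) = (\<Sum>j<2^m. c 0 j * y ^ j)"
    proof -
      have "(\<Sum>i<2^(r*m). \<Sum>j<2^m. c i j * x ^ i * y ^ j) = (\<Sum>i<(2::nat)^(r*m). if i = 0 then (\<Sum>j<2^m. c 0 j * y ^ j) else 0)"
        by (rule sum.cong[OF refl]) (simp add: c_def)
      also have "\<dots> = (\<Sum>j<2^m. c 0 j * y ^ j)" by (simp add: sum.delta)
      finally show ?thesis .
    qed
    also have "\<dots> = (\<Sum>j<(2::nat)^m. (if j = 0 then 1 else 0) - (if j = 2^m - 1 then y ^ (2^m - 1) else 0))"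
      by (rule sum.cong[OF refl]) (simp add: c_def left_diff_distrib)
    also have "\<dots> = 1 - y ^ (2^m - 1)" by (simp add: sum_subtractf sum.delta)
    finally have S: "(\<Sum>i<2^(r*m). \<Sum>j<2^m. c i j * x ^ i * y ^ j) = 1 - y ^ (2^m - 1)" .
    have "(if g0 (x, y) then 1 else 0) = 1 - y ^ (2^m - 1)"
    proof (cases "y = 0")
      case True thus ?thesis using m1 by (simp add: g0_def)
    next
      case False
      have "y * y ^ (2^m - 1) = y ^ (2^m)" by (metis power_Suc Suc_pred' pos2 zero_less_power)
      also have "\<dots> = y" using y unfolding subfld_def by simp
      finally have "y ^ (2^m - 1) = 1" using False by simp
      thus ?thesis using False by (simp add: g0_def)
    qed
    thus "(if g0 (x, y) then 1 else 0) = (\<Sum>i<2^(r*m). \<Sum>j<2^m. c i j * x ^ i * y ^ j)" using S by simp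
  next
    fix i j :: nat
    show "c i j \<noteq> 0 \<Longrightarrow> bin_wt i + bin_wt j \<le> m"
      using bin_wt_mask[of m] by (auto simp: c_def bin_wt_0 split: if_splits)
  qed
  have ad0: "alg_deg (r * m) m g0 \<le> m" unfolding alg_deg_def by (rule Least_le[of "\<lambda>d. deg_le (r * m) m g0 d", OF deg0])
  have AI_le0: "alg_immunity (r * m) m f \<le> alg_deg (r * m) m g0"
    unfolding alg_immunity_def by (rule Least_le) (use ann0 in blast)
  have part1: "alg_immunity (r * m) m f \<le> m" using AI_le0 ad0 by linarith
  have part2: "alg_immunity (r * m) m f = m"
    if r1: "r = 1" and hS: "\<forall>t::nat. t \<le> 2 ^ m - 2 \<longrightarrow>
              card {(a, b). a \<le> 2 ^ m - 2 \<and> b \<le> 2 ^ m - 1 \<and>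
                     (u * int a + int b) mod (2 ^ m - 1) = int t mod (2 ^ m - 1) \<and>
                     bin_wt a + bin_wt b \<le> m - 1} \<le> 2 ^ (m - 1)"
  proof (rule ccontr)
    assume ne: "alg_immunity (r * m) m f \<noteq> m"
    hence lt: "alg_immunity m m f < m" using part1 r1 by simp
    have card: "card (UNIV::'a set) = 2 ^ m" using assms(4) r1 by simp
    have allsub: "y \<in> subfld m" for y :: 'a
      unfolding subfld_def using fermat[of y] card by simp
    have "\<exists>g. (nz_annih m f g \<or> nz_annih m (\<lambda>p. \<not> f p) g) \<and> alg_deg m m g = alg_immunity m m f"
      unfolding alg_immunity_def by (rule LeastI_ex) (use ann0 in blast)
    then obtain g where g: "nz_annih m f g \<or> nz_annih m (\<lambda>p. \<not> f p) g"
      and gd: "alg_deg m m g = alg_immunity m m f" by blast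
    have "deg_le m m g (2 * m)"
    proof -
      obtain c where c: "\<forall>x y. (if g (x, y) then 1 else 0) =
          (\<Sum>i<card (UNIV::'a set). \<Sum>j<card (UNIV::'a set). c i j * x ^ i * y ^ j)"
        using interp[of "\<lambda>x y. if g (x, y) then 1 else 0"] by blast
      show ?thesis unfolding deg_le_def
      proof (rule exI[of _ c], intro conjI allI impI)
        fix x y :: 'a
        show "(if g (x, y) then 1 else 0) = (\<Sum>i<2 ^ m. \<Sum>j<2 ^ m. c i j * x ^ i * y ^ j)"
          using c card by simp
      next
        fix i j :: nat assume "i < 2^m" "j < 2^m"
        hence "bin_wt i \<le> m" "bin_wt j \<le> m" by (simp_all add: bin_wt_le)
        thus "bin_wt i + bin_wt j \<le> 2 * m" by simp
      qed
    qed
    hence "deg_le m m g (alg_deg m m g)" unfolding alg_deg_def by (rule LeastI)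
    then obtain c where crep: "\<forall>x y. y \<in> subfld m \<longrightarrow>
           (if g (x, y) then 1 else 0) = (\<Sum>i<2^m. \<Sum>j<2^m. c i j * x ^ i * y ^ j)"
      and cw: "\<forall>i<2^m. \<forall>j<2^m. c i j \<noteq> 0 \<longrightarrow> bin_wt i + bin_wt j \<le> alg_deg m m g"
      unfolding deg_le_def by blast
    have grep: "(if g (x, y) then 1 else 0) = GG c (2^m) x y" for x y
      using crep allsub unfolding GG_def by blast
    have wt: "\<forall>i<2^m. \<forall>j<2^m. c i j \<noteq> 0 \<longrightarrow> bin_wt i + bin_wt j \<le> m - 1"
    proof (intro allI impI)
      fix i j assume "i < (2::nat)^m" "j < (2::nat)^m" "c i j \<noteq> 0"
      hence "bin_wt i + bin_wt j \<le> alg_deg m m g" using cw by blast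
      thus "bin_wt i + bin_wt j \<le> m - 1" using gd lt by linarith
    qed
    have "(2::nat)^2 \<le> 2^m" using m3 by (intro power_increasing) auto
    hence c3: "card (UNIV::'a set) \<ge> 3" using card by simp
    have a0: "\<alpha> \<noteq> 0" by (rule prim_nonzero[OF assms(6) c3])
    have yu0: "y powi u \<noteq> 0" if "y \<noteq> 0" for y :: 'a using that by (simp add: power_int_not_zero)
    have fpt: "f (\<gamma> * y powi u, y) \<longleftrightarrow> (\<exists>i. \<gamma> = \<alpha> ^ i \<and> s \<le> i \<and> i \<le> s + 2 ^ (m - 1) - 1)"
      if "y \<noteq> 0" for \<gamma> y
    proof
      assume "f (\<gamma> * y powi u, y)"
      then obtain \<gamma>' y' i where e: "(\<gamma> * y powi u, y) = (\<gamma>' * y' powi u, y')" and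
        i: "\<gamma>' = \<alpha> ^ i" "s \<le> i" "i \<le> s + 2 ^ (r * m - 1) - 1" using fdef by blast
      hence "\<gamma> = \<gamma>'" using yu0[OF that] by auto
      thus "\<exists>i. \<gamma> = \<alpha> ^ i \<and> s \<le> i \<and> i \<le> s + 2 ^ (m - 1) - 1" using i r1 by auto
    next
      assume "\<exists>i. \<gamma> = \<alpha> ^ i \<and> s \<le> i \<and> i \<le> s + 2 ^ (m - 1) - 1"
      thus "f (\<gamma> * y powi u, y)" using fdef that allsub r1 by auto
    qed
    have dom: "p \<in> dom2 m" for p :: "'a \<times> 'a" unfolding dom2_def using allsub by (cases p) auto
    have V: "(\<forall>y. y \<noteq> 0 \<longrightarrow> (\<forall>k<(2::nat)^(m-1). GG c (2^m) (\<alpha> ^ (s + k) * y powi u) y = 0))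
          \<or> (\<forall>y. y \<noteq> 0 \<longrightarrow> GG c (2^m) (0 * y powi u) y = 0 \<and>
               (\<forall>k<(2::nat)^(m-1) - 1. GG c (2^m) (\<alpha> ^ (s + 2^(m-1) + k) * y powi u) y = 0))"
    proof (cases "nz_annih m f g")
      case True
      hence ann: "\<not> g p" if "f p" for p using that dom unfolding nz_annih_def by blast
      have "\<forall>y. y \<noteq> 0 \<longrightarrow> (\<forall>k<(2::nat)^(m-1). GG c (2^m) (\<alpha> ^ (s + k) * y powi u) y = 0)"
      proof (intro allI impI)
        fix y :: 'a and k :: nat assume y: "y \<noteq> 0" and k: "k < 2^(m-1)"
        have "f (\<alpha> ^ (s + k) * y powi u, y)" using fpt[OF y] k by auto
        hence "\<not> g (\<alpha> ^ (s + k) * y powi u, y)" by (rule ann)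
        thus "GG c (2^m) (\<alpha> ^ (s + k) * y powi u) y = 0" using grep by (metis (full_types))
      qed
      thus ?thesis by blast
    next
      case False
      hence "nz_annih m (\<lambda>p. \<not> f p) g" using g by blast
      hence ann: "\<not> g p" if "\<not> f p" for p using that dom unfolding nz_annih_def by blast
      define K :: nat where "K = 2^(m-1)"
      have KK: "2 * K = 2^m" unfolding K_def using m3 by (cases m) auto
      have Qc: "card (UNIV::'a set) - 1 = 2 * K - 1" using card KK by simp
      have "\<forall>y. y \<noteq> 0 \<longrightarrow> GG c (2^m) (0 * y powi u) y = 0 \<and>
               (\<forall>k<(2::nat)^(m-1) - 1. GG c (2^m) (\<alpha> ^ (s + 2^(m-1) + k) * y powi u) y = 0)"
      proof (intro allI impI conjI)
        fix y :: 'a assume y: "y \<noteq> 0"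
        have h0: "f (0 * y powi u, y) \<longleftrightarrow> (\<exists>i. (0::'a) = \<alpha> ^ i \<and> s \<le> i \<and> i \<le> s + 2 ^ (m - 1) - 1)"
          by (rule fpt[OF y])
        have "\<not> f (0 * y powi u, y)"
        proof
          assume "f (0 * y powi u, y)"
          then obtain i where "(0::'a) = \<alpha> ^ i" using h0 by blast
          thus False using a0 by simp
        qed
        hence "\<not> g (0 * y powi u, y)" by (rule ann)
        thus "GG c (2^m) (0 * y powi u) y = 0" using grep by (metis (full_types))
        fix k :: nat assume k: "k < 2^(m-1) - 1"
        have "\<not> f (\<alpha> ^ (s + 2^(m-1) + k) * y powi u, y)"
        proof
          assume "f (\<alpha> ^ (s + 2^(m-1) + k) * y powi u, y)"
          then obtain i where i: "\<alpha> ^ (s + K + k) = \<alpha> ^ i" "s \<le> i" "i \<le> s + K - 1"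
            using fpt[OF y] K_def by auto
          have "(s + K + k) mod (card (UNIV::'a set) - 1) = i mod (card (UNIV::'a set) - 1)"
            by (rule pow_eq_mod[OF assms(6) c3 i(1)])
          hence md: "(s + K + k) mod (2 * K - 1) = i mod (2 * K - 1)" using Qc by simp
          have K1: "K \<ge> 1" unfolding K_def by simp
          have "i \<le> s + K + k" using i K1 by linarith
          hence "(2 * K - 1) dvd (s + K + k - i)" using md mod_eq_dvd_iff_nat by blast
          moreover have "0 < s + K + k - i" using i K1 by linarith
          moreover have "s + K + k - i < 2 * K - 1" using i k K_def by linarith
          ultimately show False by (simp add: nat_dvd_not_less)
        qed
        hence "\<not> g (\<alpha> ^ (s + 2^(m-1) + k) * y powi u, y)" by (rule ann)
        thus "GG c (2^m) (\<alpha> ^ (s + 2^(m-1) + k) * y powi u) y = 0" using grep by (metis (full_types))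
      qed
      thus ?thesis by blast
    qed
    have m2: "m \<ge> 2" using m3 by simp
    have call: "\<forall>i<2^m. \<forall>j<2^m. c i j = 0"
      by (rule core[OF card m2 assms(6) hS wt V])
    have "\<not> g p" for p
    proof (cases p)
      case (Pair x y)
      have "GG c (2^m) x y = 0" unfolding GG_def using call by simp
      thus ?thesis using grep[of x y] Pair by (metis zero_neq_one)
    qed
    moreover have "\<exists>p. g p" using g unfolding nz_annih_def by blast
    ultimately show False by blast
  qed
  show ?thesis using part1 part2 by blast
qed

end
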